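(* Let $(E,\|\cdot\|_E)$ be a fully symmetric sequence space. The following are equivalent: (i) $E$ has the uniform individual ergodic theorem property, i.e. for every $x\in E$ and every Dunford–Schwartz operator $T$ on $l_\infty$ there exists $\widehat{x}\in E$ with $\big\|\frac1n\sum_{k=0}^{n-1}T^k(x)-\widehat{x}\big\|_\infty\to0$; (ii) $E\subset c_0$; (iii) $\mathbf 1=\{1,1,1,\dots\}\notin E$.
   Context: $l_\infty$ is the Banach lattice of bounded real sequences $x=\{(x)_n\}_{n\ge1}$ with $\|x\|_\infty=\sup_n|(x)_n|$; $c_0$ is the subspace of sequences converging to $0$; $l_1$ is the space of absolutely summable sequences with $\|x\|_1=\sum_n|(x)_n|$. A linear operator $T:l_\infty\to l_\infty$ is a Dunford–Schwartz operator if $\|T(x)\|_1\le\|x\|_1$ for all $x\in l_1$ and $\|T(x)\|_\infty\le\|x\|_\infty$ for all $x\in l_\infty$. For $x\in l_\infty$, its non-increasing rearrangement is the sequence $x^*$ with $(x^* )_n=\inf\{\sup_{m\notin F}|(x)_m| : F\subset\mathbb N\text{ finite}, \operatorname{card}(F)<n\}$. A symmetric sequence space is a nonzero linear subspace $E\subset l_\infty$ with a Banach norm $\|\cdot\|_E$ such that $y\in E$, $x\in l_\infty$, $x^*\le y^*$ imply $x\in E$ and $\|x\|_E\le\|y\|_E$ (normalized so that $\|\{1,0,0,\dots\}\|_E=1$). Write $x\prec y$ if $\sum_{n=1}^k(x^* )_n\le\sum_{n=1}^k(y^* )_n$ for all $k$. A symmetric sequence space $E$ is fully symmetric if $x\in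 l_\infty$, $y\in E$, $x\prec y$ imply $x\in E$ and $\|x\|_E\le\|y\|_E$. *)

theory Defs
  imports "HOL-Analysis.Analysis"
begin

text \<open>Sequences are indexed by nat starting at 0 (the paper's index n corresponds to n-1 here).\<close>

type_synonym seq = "nat \<Rightarrow> real"

definition linf :: "seq set" where
  "linf = {x. bounded (range x)}"

definition sup_norm :: "seq \<Rightarrow> real" where
  "sup_norm x = (SUP n. \<bar>x n\<bar>)"

definition l1 :: "seq set" where
  "l1 = {x. summable (\<lambda>n. \<bar>x n\<bar>)}"

definition l1_norm :: "seq \<Rightarrow> real" where
  "l1_norm x = (\<Sum>n. \<bar>x n\<bar>)"

definition c0 :: "seq set" where
  "c0 = {x. x \<longlonglongrightarrow> 0}"

definition one_seq :: seq where
  "one_seq = (\<lambda>_. 1)"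

text \<open>Linear operator on l_infty (only its values on l_infty matter).\<close>
definition linear_on_linf :: "(seq \<Rightarrow> seq) \<Rightarrow> bool" where
  "linear_on_linf T \<longleftrightarrow>
     (\<forall>x\<in>linf. T x \<in> linf) \<and>
     (\<forall>x\<in>linf. \<forall>y\<in>linf. T (\<lambda>n. x n + y n) = (\<lambda>n. T x n + T y n)) \<and>
     (\<forall>x\<in>linf. \<forall>c::real. T (\<lambda>n. c * x n) = (\<lambda>n. c * T x n))"

definition dunford_schwartz :: "(seq \<Rightarrow> seq) \<Rightarrow> bool" where
  "dunford_schwartz T \<longleftrightarrow> linear_on_linf T \<and>
     (\<forall>x\<in>l1. T x \<in> l1 \<and> l1_norm (T x) \<le> l1_norm x) \<and>
     (\<forall>x\<in>linf. sup_norm (T x) \<le> sup_norm x)"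

text \<open>Non-increasing rearrangement; meaningful for n \<ge> 1 (paper's (x^*)_n).\<close>
definition rearr :: "seq \<Rightarrow> nat \<Rightarrow> real" where
  "rearr x n = Inf {(SUP m\<in>(- F). \<bar>x m\<bar>) | F. finite F \<and> card F < n}"

definition majorized :: "seq \<Rightarrow> seq \<Rightarrow> bool" (infix "\<prec>" 50) where
  "x \<prec> y \<longleftrightarrow> (\<forall>k. (\<Sum>n=1..k. rearr x n) \<le> (\<Sum>n=1..k. rearr y n))"

definition banach_norm_on :: "seq set \<Rightarrow> (seq \<Rightarrow> real) \<Rightarrow> bool" where
  "banach_norm_on E NE \<longleftrightarrow>
     (\<forall>x\<in>E. NE x \<ge> 0 \<and> (NE x = 0 \<longleftrightarrow> x = (\<lambda>_. 0))) \<and>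
     (\<forall>x\<in>E. \<forall>c::real. NE (\<lambda>n. c * x n) = \<bar>c\<bar> * NE x) \<and>
     (\<forall>x\<in>E. \<forall>y\<in>E. NE (\<lambda>n. x n + y n) \<le> NE x + NE y) \<and>
     (\<forall>X::nat \<Rightarrow> seq. (\<forall>k. X k \<in> E) \<and>
        (\<forall>e>0. \<exists>N. \<forall>m\<ge>N. \<forall>k\<ge>N. NE (\<lambda>n. X m n - X k n) < e) \<longrightarrow>
        (\<exists>l\<in>E. (\<lambda>k. NE (\<lambda>n. X k n - l n)) \<longlonglongrightarrow> 0))"

definition symmetric_seq_space :: "seq set \<Rightarrow> (seq \<Rightarrow> real) \<Rightarrow> bool" where
  "symmetric_seq_space E NE \<longleftrightarrow>
     E \<subseteq> linf \<and> E \<noteq> {\<lambda>_. 0} \<and> (\<lambda>_. 0) \<in> E \<and>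
     (\<forall>x\<in>E. \<forall>y\<in>E. (\<lambda>n. x n + y n) \<in> E) \<and>
     (\<forall>x\<in>E. \<forall>c::real. (\<lambda>n. c * x n) \<in> E) \<and>
     banach_norm_on E NE \<and>
     (\<forall>x y. y \<in> E \<and> x \<in> linf \<and> (\<forall>n\<ge>1. rearr x n \<le> rearr y n) \<longrightarrow>
        x \<in> E \<and> NE x \<le> NE y) \<and>
     NE (\<lambda>n. if n = 0 then 1 else 0) = 1"

definition fully_symmetric :: "seq set \<Rightarrow> (seq \<Rightarrow> real) \<Rightarrow> bool" where
  "fully_symmetric E NE \<longleftrightarrow> symmetric_seq_space E NE \<and>
     (\<forall>x y. x \<in> linf \<and> y \<in> E \<and> x \<prec> y \<longrightarrow> x \<in> E \<and> NE x \<le> NE y)"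

definition ergodic_avg :: "(seq \<Rightarrow> seq) \<Rightarrow> seq \<Rightarrow> nat \<Rightarrow> seq" where
  "ergodic_avg T x n = (\<lambda>m. (1 / real n) * (\<Sum>k<n. (T ^^ k) x m))"

definition uniform_IET_property :: "seq set \<Rightarrow> bool" where
  "uniform_IET_property E \<longleftrightarrow>
     (\<forall>x\<in>E. \<forall>T. dunford_schwartz T \<longrightarrow>
        (\<exists>xh\<in>E. (\<lambda>n. sup_norm (\<lambda>m. ergodic_avg T x n m - xh m)) \<longlonglongrightarrow> 0))"

end

theory Submission
  imports Defs
begin

lemma linf_iff: "x \<in> linf \<longleftrightarrow> (\<exists>B. \<forall>i. \<bar>x i\<bar> \<le> B)"
  unfolding linf_def bounded_iff by auto

lemma linfI: "(\<And>i. \<bar>x i\<bar> \<le> B) \<Longrightarrow> x \<in> linf"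
  unfolding linf_iff by auto

lemma linf_bdd: "x \<in> linf \<Longrightarrow> bdd_above (range (\<lambda>n. \<bar>x n\<bar>))"
  unfolding linf_iff bdd_above_def by auto

lemma sup_norm_ge: "x \<in> linf \<Longrightarrow> \<bar>x i\<bar> \<le> sup_norm x"
  unfolding sup_norm_def using linf_bdd by (intro cSUP_upper) auto

lemma sup_norm_le: "(\<And>i. \<bar>x i\<bar> \<le> B) \<Longrightarrow> sup_norm x \<le> B"
  unfolding sup_norm_def by (intro cSUP_least) auto

lemma sup_norm_nonneg: "x \<in> linf \<Longrightarrow> 0 \<le> sup_norm x"
  using sup_norm_ge[of x 0] by linarith

lemma linf_add: "x \<in> linf \<Longrightarrow> y \<in> linf \<Longrightarrow> (\<lambda>n. x n + y n) \<in> linf"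
proof -
  assume a: "x \<in> linf" "y \<in> linf"
  then obtain A B where "\<forall>i. \<bar>x i\<bar> \<le> A" "\<forall>i. \<bar>y i\<bar> \<le> B" unfolding linf_iff by auto
  then show ?thesis by (intro linfI[of _ "A+B"]) (metis abs_triangle_ineq add_mono order_trans)
qed

lemma linf_scale: "x \<in> linf \<Longrightarrow> (\<lambda>n. c * x n) \<in> linf"
proof -
  assume a: "x \<in> linf"
  then obtain A where "\<forall>i. \<bar>x i\<bar> \<le> A" unfolding linf_iff by auto
  then show ?thesis by (intro linfI[of _ "\<bar>c\<bar>*A"]) (simp add: abs_mult mult_left_mono)
qed

lemma linf_diff: "x \<in> linf \<Longrightarrow> y \<in> linf \<Longrightarrow> (\<lambda>n. x n - y n) \<in> linf"
  using linf_add[of x "\<lambda>n. (-1) * y n"] linf_scale[of y "-1"] by simp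

lemma linf_zero: "(\<lambda>_. 0) \<in> linf"
  by (intro linfI[of _ 0]) auto

lemma linf_sum: "finite S \<Longrightarrow> (\<And>k. k \<in> S \<Longrightarrow> f k \<in> linf) \<Longrightarrow> (\<lambda>n. \<Sum>k\<in>S. f k n) \<in> linf"
  by (induction S rule: finite_induct) (auto simp: linf_zero intro!: linf_add)

lemma l1_norm_ge_sum: "x \<in> l1 \<Longrightarrow> finite F \<Longrightarrow> (\<Sum>i\<in>F. \<bar>x i\<bar>) \<le> l1_norm x"
  unfolding l1_def l1_norm_def by (intro sum_le_suminf) auto

lemma l1_norm_ge: "x \<in> l1 \<Longrightarrow> \<bar>x i\<bar> \<le> l1_norm x"
  using l1_norm_ge_sum[of x "{i}"] by simp

lemma l1_norm_nonneg: "x \<in> l1 \<Longrightarrow> 0 \<le> l1_norm x"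
  unfolding l1_norm_def l1_def by (auto intro: suminf_nonneg)

lemma l1_imp_linf: "x \<in> l1 \<Longrightarrow> x \<in> linf"
  using l1_norm_ge by (intro linfI) 

lemma l1_add: "x \<in> l1 \<Longrightarrow> y \<in> l1 \<Longrightarrow> (\<lambda>n. x n + y n) \<in> l1 \<and> l1_norm (\<lambda>n. x n + y n) \<le> l1_norm x + l1_norm y"
proof -
  assume a: "x \<in> l1" "y \<in> l1"
  have s: "summable (\<lambda>n. \<bar>x n\<bar> + \<bar>y n\<bar>)" using a unfolding l1_def by (intro summable_add) auto
  have s2: "summable (\<lambda>n. \<bar>x n + y n\<bar>)"
    by (rule summable_comparison_test'[OF s, of 0]) auto
  have "(\<Sum>n. \<bar>x n + y n\<bar>) \<le> (\<Sum>n. \<bar>x n\<bar> + \<bar>y n\<bar>)"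
    using s s2 by (intro suminf_le) auto
  also have "\<dots> = l1_norm x + l1_norm y" using a unfolding l1_def l1_norm_def by (intro suminf_add[symmetric]) auto
  finally show ?thesis using s2 unfolding l1_def l1_norm_def by auto
qed

lemma l1_scale: "x \<in> l1 \<Longrightarrow> (\<lambda>n. c * x n) \<in> l1 \<and> l1_norm (\<lambda>n. c * x n) = \<bar>c\<bar> * l1_norm x"
  unfolding l1_def l1_norm_def by (auto simp: abs_mult intro: summable_mult suminf_mult)

lemma l1_zero: "(\<lambda>_. 0) \<in> l1 \<and> l1_norm (\<lambda>_. 0) = 0"
  unfolding l1_def l1_norm_def by auto

lemma l1_sum: "finite S \<Longrightarrow> (\<And>k. k \<in> S \<Longrightarrow> f k \<in> l1) \<Longrightarrow> (\<lambda>n. \<Sum>k\<in>S. f k n) \<in> l1 \<and> l1_norm (\<lambda>n. \<Sum>k\<in>S. f k n) \<le> (\<Sum>k\<in>S. l1_norm (f k))"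
proof (induction S rule: finite_induct)
  case empty then show ?case using l1_zero by simp
next
  case (insert a S)
  then have IH: "(\<lambda>n. \<Sum>k\<in>S. f k n) \<in> l1" "l1_norm (\<lambda>n. \<Sum>k\<in>S. f k n) \<le> (\<Sum>k\<in>S. l1_norm (f k))" by auto
  have fa: "f a \<in> l1" using insert by auto
  show ?case using l1_add[OF fa IH(1)] IH(2) insert(1,2) by simp
qed

lemma finite_supp_l1: "(\<And>i. i \<notin> S \<Longrightarrow> x i = 0) \<Longrightarrow> finite S \<Longrightarrow> x \<in> l1 \<and> l1_norm x = (\<Sum>i\<in>S. \<bar>x i\<bar>)"
  unfolding l1_def l1_norm_def
  by (auto intro!: summable_finite suminf_finite)

lemma DS_linf: "dunford_schwartz T \<Longrightarrow> x \<in> linf \<Longrightarrow> T x \<in> linf"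
  unfolding dunford_schwartz_def linear_on_linf_def by auto
lemma DS_add: "dunford_schwartz T \<Longrightarrow> x \<in> linf \<Longrightarrow> y \<in> linf \<Longrightarrow> T (\<lambda>n. x n + y n) = (\<lambda>n. T x n + T y n)"
  unfolding dunford_schwartz_def linear_on_linf_def by auto
lemma DS_scale: "dunford_schwartz T \<Longrightarrow> x \<in> linf \<Longrightarrow> T (\<lambda>n. c * x n) = (\<lambda>n. c * T x n)"
  unfolding dunford_schwartz_def linear_on_linf_def by auto
lemma DS_l1: "dunford_schwartz T \<Longrightarrow> x \<in> l1 \<Longrightarrow> T x \<in> l1 \<and> l1_norm (T x) \<le> l1_norm x"
  unfolding dunford_schwartz_def by auto
lemma DS_sup: "dunford_schwartz T \<Longrightarrow> x \<in> linf \<Longrightarrow> sup_norm (T x) \<le> sup_norm x"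
  unfolding dunford_schwartz_def by auto
lemma DS_zero: "dunford_schwartz T \<Longrightarrow> T (\<lambda>_. 0) = (\<lambda>_. 0)"
  using DS_scale[of T "\<lambda>_. 0" 0] linf_zero by simp
lemma DS_diff: "dunford_schwartz T \<Longrightarrow> x \<in> linf \<Longrightarrow> y \<in> linf \<Longrightarrow> T (\<lambda>n. x n - y n) = (\<lambda>n. T x n - T y n)"
  using DS_add[of T x "\<lambda>n. (-1) * y n"] DS_scale[of T y "-1"] linf_scale[of y "-1"] by simp
lemma DS_sum: assumes T: "dunford_schwartz T" shows "finite S \<Longrightarrow> (\<And>k. k \<in> S \<Longrightarrow> f k \<in> linf) \<Longrightarrow>
   T (\<lambda>n. \<Sum>k\<in>S. f k n) = (\<lambda>n. \<Sum>k\<in>S. T (f k) n)"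
proof (induction S rule: finite_induct)
  case empty then show ?case using DS_zero[OF T] by simp
next
  case (insert a S)
  have "T (\<lambda>n. \<Sum>k\<in>insert a S. f k n) = T (\<lambda>n. f a n + (\<Sum>k\<in>S. f k n))" using insert(1,2) by simp
  also have "\<dots> = (\<lambda>n. T (f a) n + T (\<lambda>n. \<Sum>k\<in>S. f k n) n)"
    using insert by (intro DS_add[OF T] linf_sum) auto
  finally show ?case using insert by simp
qed
lemma DS_supabs: "dunford_schwartz T \<Longrightarrow> x \<in> linf \<Longrightarrow> \<bar>T x i\<bar> \<le> sup_norm x"
  using sup_norm_ge[OF DS_linf] DS_sup by (meson order_trans)

lemma DS_id: "dunford_schwartz id"
  unfolding dunford_schwartz_def linear_on_linf_def by auto

lemma DS_comp: "dunford_schwartz S \<Longrightarrow> dunford_schwartz T \<Longrightarrow> dunford_schwartz (S \<circ> T)"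
  unfolding dunford_schwartz_def linear_on_linf_def
  by (simp add: l1_imp_linf) (meson order_trans l1_imp_linf)

lemma DS_pow: "dunford_schwartz T \<Longrightarrow> dunford_schwartz (T ^^ k)"
  by (induction k) (auto simp: DS_id intro: DS_comp)

lemma avg_eq: "ergodic_avg T x n = (\<lambda>m. (1 / real n) * (\<lambda>m. \<Sum>k\<in>{..<n}. (T ^^ k) x m) m)"
  unfolding ergodic_avg_def by simp

lemma DS_avg: assumes T: "dunford_schwartz T" shows "dunford_schwartz (\<lambda>x. ergodic_avg T x n)"
proof -
  have P: "\<And>k. dunford_schwartz (T ^^ k)" using DS_pow[OF T] .
  have lin: "\<And>x. x \<in> linf \<Longrightarrow> (\<lambda>m. \<Sum>k\<in>{..<n}. (T ^^ k) x m) \<in> linf"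
    using P by (intro linf_sum) (auto intro: DS_linf)
  have A1: "\<forall>x\<in>linf. ergodic_avg T x n \<in> linf"
    using lin linf_scale by (simp only: avg_eq) blast
  have A2: "\<forall>x\<in>linf. \<forall>y\<in>linf. ergodic_avg T (\<lambda>m. x m + y m) n = (\<lambda>m. ergodic_avg T x n m + ergodic_avg T y n m)"
    using P by (auto simp: ergodic_avg_def DS_add sum.distrib algebra_simps)
  have A3: "\<forall>x\<in>linf. \<forall>c::real. ergodic_avg T (\<lambda>m. c * x m) n = (\<lambda>m. c * ergodic_avg T x n m)"
    using P by (auto simp: ergodic_avg_def DS_scale sum_distrib_left algebra_simps)
  have A4: "ergodic_avg T x n \<in> l1 \<and> l1_norm (ergodic_avg T x n) \<le> l1_norm x" if x: "x \<in> l1" for x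
  proof -
    have s: "(\<lambda>m. \<Sum>k\<in>{..<n}. (T ^^ k) x m) \<in> l1" "l1_norm (\<lambda>m. \<Sum>k\<in>{..<n}. (T ^^ k) x m) \<le> (\<Sum>k\<in>{..<n}. l1_norm ((T ^^ k) x))"
      using l1_sum[of "{..<n}" "\<lambda>k. (T ^^ k) x"] P x DS_l1 by auto
    have "(\<Sum>k\<in>{..<n}. l1_norm ((T ^^ k) x)) \<le> (\<Sum>k\<in>{..<n}. l1_norm x)"
      using P x DS_l1 by (intro sum_mono) auto
    then have b: "l1_norm (\<lambda>m. \<Sum>k\<in>{..<n}. (T ^^ k) x m) \<le> real n * l1_norm x" using s by simp
    have "l1_norm (ergodic_avg T x n) = (1 / real n) * l1_norm (\<lambda>m. \<Sum>k\<in>{..<n}. (T ^^ k) x m)"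
      using l1_scale[OF s(1), of "1 / real n"] by (simp add: avg_eq)
    also have "\<dots> \<le> l1_norm x"
    proof (cases "n = 0")
      case True then show ?thesis using l1_norm_nonneg[OF x] by simp
    next
      case False then show ?thesis using b by (simp add: field_simps)
    qed
    finally show ?thesis using l1_scale[OF s(1), of "1 / real n"] by (simp add: avg_eq)
  qed
  have A5: "sup_norm (ergodic_avg T x n) \<le> sup_norm x" if x: "x \<in> linf" for x
  proof (rule sup_norm_le)
    fix i
    have "\<bar>\<Sum>k\<in>{..<n}. (T ^^ k) x i\<bar> \<le> (\<Sum>k\<in>{..<n}. \<bar>(T ^^ k) x i\<bar>)" by (rule sum_abs)
    also have "\<dots> \<le> (\<Sum>k\<in>{..<n}. sup_norm x)" using P x by (intro sum_mono DS_supabs) auto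
    finally have b: "\<bar>\<Sum>k\<in>{..<n}. (T ^^ k) x i\<bar> \<le> real n * sup_norm x" by simp
    show "\<bar>ergodic_avg T x n i\<bar> \<le> sup_norm x"
    proof (cases "n = 0")
      case True then show ?thesis using sup_norm_nonneg[OF x] by (simp add: ergodic_avg_def)
    next
      case False then show ?thesis using b by (simp add: ergodic_avg_def abs_mult field_simps)
    qed
  qed
  show ?thesis unfolding dunford_schwartz_def linear_on_linf_def using A1 A2 A3 A4 A5 by auto
qed

definition qn :: "seq \<Rightarrow> real" where "qn y = (\<Sum>i. (y i)^2)"
definition l2s :: "seq set" where "l2s = {y. summable (\<lambda>i. (y i)^2)}"
definition trunc :: "nat \<Rightarrow> seq \<Rightarrow> seq" where "trunc N y = (\<lambda>j. if j < N then y j else 0)"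
definition ev :: "nat \<Rightarrow> seq" where "ev j = (\<lambda>i. if i = j then 1 else 0)"

lemma bounded_partials: assumes "\<And>n. 0 \<le> f n" "\<And>M. (\<Sum>i<M. f i) \<le> (B::real)"
  shows "summable f \<and> suminf f \<le> B"
  using summableI_nonneg_bounded[of f B] assms suminf_le_const by blast

lemma qn_dom: assumes "\<And>i. (y i)^2 \<le> g i" "summable g"
  shows "y \<in> l2s \<and> qn y \<le> suminf g"
proof -
  have s: "summable (\<lambda>i. (y i)^2)"
    by (rule summable_comparison_test'[OF assms(2), of 0]) (use assms in auto)
  then show ?thesis unfolding l2s_def qn_def using assms by (auto intro: suminf_le)
qed

lemma qn_nonneg: "y \<in> l2s \<Longrightarrow> 0 \<le> qn y"
  unfolding qn_def l2s_def by (auto intro: suminf_nonneg)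

lemma l1_diff: "x \<in> l1 \<Longrightarrow> y \<in> l1 \<Longrightarrow> (\<lambda>j. x j - y j) \<in> l1"
  using l1_add[of x "\<lambda>j. (-1) * y j"] l1_scale[of y "-1"] by simp

lemma l1_imp_l2: assumes "y \<in> l1" shows "y \<in> l2s"
proof -
  have "summable (\<lambda>i. l1_norm y * \<bar>y i\<bar>)" using assms unfolding l1_def by (auto intro: summable_mult)
  moreover have "(y i)^2 \<le> l1_norm y * \<bar>y i\<bar>" for i
  proof -
    have "(y i)^2 = \<bar>y i\<bar> * \<bar>y i\<bar>" by (simp add: power2_eq_square)
    also have "\<dots> \<le> l1_norm y * \<bar>y i\<bar>" using l1_norm_ge[OF assms, of i] by (intro mult_right_mono) auto
    finally show ?thesis .
  qed
  ultimately show ?thesis using qn_dom[of y "\<lambda>i. l1_norm y * \<bar>y i\<bar>"] by blast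
qed

lemma wCS: fixes t y :: "'b \<Rightarrow> real" shows "(\<Sum>j\<in>S. t j * y j)^2 \<le> (\<Sum>j\<in>S. \<bar>t j\<bar>) * (\<Sum>j\<in>S. \<bar>t j\<bar> * (y j)^2)"
proof -
  have e1: "t j * y j = sqrt \<bar>t j\<bar> * (sgn (t j) * sqrt \<bar>t j\<bar> * y j)" for j
  proof -
    have "sqrt \<bar>t j\<bar> * (sgn (t j) * sqrt \<bar>t j\<bar> * y j) = sgn (t j) * (sqrt \<bar>t j\<bar> * sqrt \<bar>t j\<bar>) * y j"
      by (simp only: ac_simps)
    also have "\<dots> = sgn (t j) * \<bar>t j\<bar> * y j" by simp
    also have "\<dots> = t j * y j" by (simp add: sgn_if)
    finally show ?thesis by (rule sym)
  qed
  have e2: "(sqrt \<bar>t j\<bar>)^2 = \<bar>t j\<bar>" for j by simp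
  have e3: "(sgn (t j) * sqrt \<bar>t j\<bar> * y j)^2 = \<bar>t j\<bar> * (y j)^2" for j
    by (cases "t j = 0") (auto simp: power_mult_distrib sgn_if)
  show ?thesis using Cauchy_Schwarz_ineq_sum[of "\<lambda>j. sqrt \<bar>t j\<bar>" "\<lambda>j. sgn (t j) * sqrt \<bar>t j\<bar> * y j" S]
    unfolding e1[symmetric] e2 e3 .
qed

lemma sgn_times: "sgn (x::real) * x = \<bar>x\<bar>" by (simp add: sgn_if)

lemma ev_linf: "ev j \<in> linf" unfolding ev_def by (intro linfI[of _ 1]) auto
lemma ev_l1: "ev j \<in> l1 \<and> l1_norm (ev j) = 1"
  using finite_supp_l1[of "{j}" "ev j"] unfolding ev_def by auto

lemma trunc_eq: "trunc N y = (\<lambda>i. \<Sum>j<N. y j * ev j i)"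
  unfolding trunc_def ev_def by (auto simp: if_distrib cong: if_cong)

lemma T_trunc: assumes T: "dunford_schwartz T"
  shows "T (trunc N y) = (\<lambda>i. \<Sum>j<N. y j * T (ev j) i)"
proof -
  have "T (trunc N y) = T (\<lambda>i. \<Sum>j\<in>{..<N}. (\<lambda>i. y j * ev j i) i)" unfolding trunc_eq by simp
  also have "\<dots> = (\<lambda>i. \<Sum>j\<in>{..<N}. T (\<lambda>i. y j * ev j i) i)"
    using ev_linf by (intro DS_sum[OF T]) (auto intro: linf_scale)
  also have "\<dots> = (\<lambda>i. \<Sum>j<N. y j * T (ev j) i)" using DS_scale[OF T ev_linf] by simp
  finally show ?thesis .
qed

lemma row_bound: assumes T: "dunford_schwartz T"
  shows "(\<Sum>j<N. \<bar>T (ev j) i\<bar>) \<le> 1"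
proof -
  define s where "s = trunc N (\<lambda>j. sgn (T (ev j) i))"
  have sb: "\<bar>s m\<bar> \<le> 1" for m unfolding s_def trunc_def by (auto simp: sgn_if)
  have sl: "s \<in> linf" using sb by (rule linfI)
  have "T s i = (\<Sum>j<N. \<bar>T (ev j) i\<bar>)" unfolding s_def T_trunc[OF T] by (simp add: sgn_times)
  moreover have "\<bar>T s i\<bar> \<le> 1" using DS_supabs[OF T sl, of i] sup_norm_le[of s 1, OF sb] by linarith
  ultimately show ?thesis by linarith
qed

lemma col_bound: assumes T: "dunford_schwartz T"
  shows "(\<Sum>i<M. \<bar>T (ev j) i\<bar>) \<le> 1"
  using l1_norm_ge_sum[of "T (ev j)" "{..<M}"] DS_l1[OF T, of "ev j"] ev_l1 by auto

lemma schur_fin: assumes T: "dunford_schwartz T"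
  shows "(\<Sum>i<M. (T (trunc N y) i)^2) \<le> (\<Sum>j<N. (y j)^2)"
proof -
  have "(T (trunc N y) i)^2 \<le> (\<Sum>j<N. \<bar>T (ev j) i\<bar> * (y j)^2)" for i
  proof -
    have "(T (trunc N y) i)^2 \<le> (\<Sum>j<N. \<bar>T (ev j) i\<bar>) * (\<Sum>j<N. \<bar>T (ev j) i\<bar> * (y j)^2)"
      unfolding T_trunc[OF T] using wCS[of "\<lambda>j. T (ev j) i" y "{..<N}"] by (simp add: mult.commute)
    also have "\<dots> \<le> 1 * (\<Sum>j<N. \<bar>T (ev j) i\<bar> * (y j)^2)"
      using row_bound[OF T] by (intro mult_right_mono sum_nonneg) auto
    finally show ?thesis by simp
  qed
  then have "(\<Sum>i<M. (T (trunc N y) i)^2) \<le> (\<Sum>i<M. \<Sum>j<N. \<bar>T (ev j) i\<bar> * (y j)^2)"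
    by (intro sum_mono)
  also have "\<dots> = (\<Sum>j<N. (y j)^2 * (\<Sum>i<M. \<bar>T (ev j) i\<bar>))"
    by (subst sum.swap) (simp add: sum_distrib_left mult.commute)
  also have "\<dots> \<le> (\<Sum>j<N. (y j)^2 * 1)"
    using col_bound[OF T] by (intro sum_mono mult_left_mono) auto
  finally show ?thesis by simp
qed

lemma tail_l1: assumes y: "y \<in> l1"
  shows "(\<lambda>N. l1_norm (\<lambda>j. y j - trunc N y j)) \<longlonglongrightarrow> 0"
proof -
  have sy: "summable (\<lambda>j. \<bar>y j\<bar>)" using y unfolding l1_def by auto
  have eq: "l1_norm (\<lambda>j. y j - trunc N y j) = l1_norm y - (\<Sum>j<N. \<bar>y j\<bar>)" for N
  proof -
    have a: "(\<lambda>j. \<bar>y j - trunc N y j\<bar>) = (\<lambda>j. \<bar>y j\<bar> - (if j < N then \<bar>y j\<bar> else 0))"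
      unfolding trunc_def by auto
    have s2: "summable (\<lambda>j. if j < N then \<bar>y j\<bar> else 0)"
      by (rule summable_finite[of "{..<N}"]) auto
    have "(\<Sum>j. (if j < N then \<bar>y j\<bar> else 0)) = (\<Sum>j<N. \<bar>y j\<bar>)"
      by (subst suminf_finite[of "{..<N}"]) auto
    then show ?thesis unfolding l1_norm_def a using suminf_diff[OF sy s2] by simp
  qed
  have "(\<lambda>N. \<Sum>j<N. \<bar>y j\<bar>) \<longlonglongrightarrow> l1_norm y" unfolding l1_norm_def using summable_LIMSEQ[OF sy] .
  then have "(\<lambda>N. l1_norm y - (\<Sum>j<N. \<bar>y j\<bar>)) \<longlonglongrightarrow> l1_norm y - l1_norm y" by (intro tendsto_intros)
  then show ?thesis unfolding eq by simp
qed

lemma trunc_l1: "trunc N y \<in> l1"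
  using finite_supp_l1[of "{..<N}" "trunc N y"] unfolding trunc_def by auto

lemma trunc_conv: assumes T: "dunford_schwartz T" and y: "y \<in> l1"
  shows "(\<lambda>N. T (trunc N y) i) \<longlonglongrightarrow> T y i"
proof -
  have "(\<lambda>N. T y i - T (trunc N y) i) \<longlonglongrightarrow> 0"
  proof (rule Lim_null_comparison)
    show "(\<lambda>N. l1_norm (\<lambda>j. y j - trunc N y j)) \<longlonglongrightarrow> 0" by (rule tail_l1[OF y])
    show "\<forall>\<^sub>F N in sequentially. norm (T y i - T (trunc N y) i) \<le> l1_norm (\<lambda>j. y j - trunc N y j)"
    proof (intro always_eventually allI)
      fix N
      have yl: "y \<in> linf" "trunc N y \<in> linf" using y trunc_l1 l1_imp_linf by auto
      have dl: "(\<lambda>j. y j - trunc N y j) \<in> l1"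
        using l1_diff[OF y trunc_l1] .
      have "T y i - T (trunc N y) i = T (\<lambda>j. y j - trunc N y j) i" using DS_diff[OF T yl] by simp
      then show "norm (T y i - T (trunc N y) i) \<le> l1_norm (\<lambda>j. y j - trunc N y j)"
        using l1_norm_ge[OF conjunct1[OF DS_l1[OF T dl]], of i] DS_l1[OF T dl] by simp
    qed
  qed
  then have "(\<lambda>N. T y i - (T y i - T (trunc N y) i)) \<longlonglongrightarrow> T y i - 0" by (intro tendsto_intros)
  then show ?thesis by simp
qed

lemma schur: assumes T: "dunford_schwartz T" and y: "y \<in> l1"
  shows "T y \<in> l2s \<and> qn (T y) \<le> qn y"
proof -
  have sy: "summable (\<lambda>j. (y j)^2)" using l1_imp_l2[OF y] unfolding l2s_def by auto
  have "(\<Sum>i<M. (T y i)^2) \<le> qn y" for M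
  proof (rule LIMSEQ_le_const2)
    show "(\<lambda>N. \<Sum>i<M. (T (trunc N y) i)^2) \<longlonglongrightarrow> (\<Sum>i<M. (T y i)^2)"
      using trunc_conv[OF T y] by (intro tendsto_intros)
    show "\<exists>N0. \<forall>N\<ge>N0. (\<Sum>i<M. (T (trunc N y) i)^2) \<le> qn y"
      using schur_fin[OF T] sum_le_suminf[OF sy, of "{..<_}"] unfolding qn_def
      by (meson finite_lessThan order_trans zero_le_power2)
  qed
  then have "summable (\<lambda>i. (T y i)^2) \<and> (\<Sum>i. (T y i)^2) \<le> qn y"
    by (intro bounded_partials) auto
  then show ?thesis unfolding l2s_def qn_def by auto
qed

lemma qn_dom_sum: assumes S: "finite S" and f: "\<And>s. s \<in> S \<Longrightarrow> summable (f s)"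
  and y: "\<And>i. (y i)^2 \<le> (\<Sum>s\<in>S. f s i)"
  shows "y \<in> l2s \<and> qn y \<le> (\<Sum>s\<in>S. suminf (f s))"
proof -
  have "summable (\<lambda>i. \<Sum>s\<in>S. f s i)" using f by (intro summable_sum) auto
  from qn_dom[OF y this] show ?thesis using suminf_sum[of S f] f by simp
qed

lemma qn_ge: "y \<in> l2s \<Longrightarrow> (y i)^2 \<le> qn y"
  unfolding l2s_def qn_def using sum_le_suminf[of "\<lambda>i. (y i)^2" "{i}"] by auto

lemma l2s_summ: "y \<in> l2s \<Longrightarrow> summable (\<lambda>i. c * (y i)^2)"
  unfolding l2s_def by (auto intro: summable_mult)

lemma suminf_cq: "y \<in> l2s \<Longrightarrow> (\<Sum>i. c * (y i)^2) = c * qn y"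
  unfolding l2s_def qn_def by (auto intro: suminf_mult)

lemma qn_split: assumes "a \<in> l2s" "b \<in> l2s" "\<eta> > 0"
  shows "qn (\<lambda>i. a i + b i) \<le> (1 + \<eta>) * qn a + (1 + 1/\<eta>) * qn b"
proof -
  define f where "f = (\<lambda>s. if s then (\<lambda>i. (1+\<eta>) * (a i)^2) else (\<lambda>i. (1 + 1/\<eta>) * (b i)^2))"
  have h: "((a i + b i))^2 \<le> (\<Sum>s\<in>{True, False}. f s i)" for i
  proof -
    have "0 \<le> (\<eta> * a i - b i)^2 / \<eta>" using assms(3) by simp
    also have "(\<eta> * a i - b i)^2 / \<eta> = (1+\<eta>) * (a i)^2 + (1 + 1/\<eta>) * (b i)^2 - (a i + b i)^2"
      using assms(3) by (simp add: power2_eq_square field_simps)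
    finally show ?thesis unfolding f_def by simp
  qed
  have "\<And>s. s \<in> {True, False} \<Longrightarrow> summable (f s)" unfolding f_def using assms l2s_summ by auto
  from qn_dom_sum[of "{True, False}" f "\<lambda>i. a i + b i", OF _ this h] assms show ?thesis
    unfolding f_def by (auto simp: l2s_summ suminf_cq)
qed

lemma qn_paral: assumes "a \<in> l2s" "b \<in> l2s"
  shows "qn (\<lambda>i. a i - b i) = 2 * qn a + 2 * qn b - 4 * qn (\<lambda>i. (a i + b i) / 2)"
proof -
  have sm: "(\<lambda>i. (a i + b i) / 2) \<in> l2s"
  proof -
    have "((a i + b i) / 2)^2 \<le> (\<Sum>s\<in>{True, False}. (if s then (\<lambda>i. (a i)^2) else (\<lambda>i. (b i)^2)) i)" for i
    proof -
      have "((a i + b i) / 2)^2 = (a i)^2 + (b i)^2 - (((a i)^2 + (b i)^2) * 2 + (a i - b i)^2) / 4"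
        by (simp add: power2_eq_square field_simps)
      also have "\<dots> \<le> (a i)^2 + (b i)^2" by simp
      finally show ?thesis by simp
    qed
    from qn_dom_sum[OF _ _ this] assms show ?thesis by (auto simp: l2s_def)
  qed
  have sa: "summable (\<lambda>i. (a i)^2)" "summable (\<lambda>i. (b i)^2)" "summable (\<lambda>i. ((a i + b i) / 2)^2)"
    using assms sm unfolding l2s_def by auto
  have "(\<lambda>i. (a i - b i)^2) = (\<lambda>i. 2 * (a i)^2 + 2 * (b i)^2 - 4 * ((a i + b i) / 2)^2)"
    by (auto simp: power2_eq_square field_simps)
  then have "qn (\<lambda>i. a i - b i) = (\<Sum>i. 2 * (a i)^2 + 2 * (b i)^2 - 4 * ((a i + b i) / 2)^2)"
    unfolding qn_def by simp
  also have "\<dots> = 2 * qn a + 2 * qn b - 4 * qn (\<lambda>i. (a i + b i) / 2)"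
  proof -
    have s1: "summable (\<lambda>i. 2 * (a i)^2)" "summable (\<lambda>i. 2 * (b i)^2)" "summable (\<lambda>i. 4 * ((a i + b i) / 2)^2)"
      using sa by (auto intro: summable_mult)
    have "(\<Sum>i. 2 * (a i)^2 + 2 * (b i)^2 - 4 * ((a i + b i) / 2)^2) = (\<Sum>i. 2 * (a i)^2 + 2 * (b i)^2) - (\<Sum>i. 4 * ((a i + b i) / 2)^2)"
      by (rule suminf_diff[OF summable_add[OF s1(1,2)] s1(3), symmetric])
    also have "\<dots> = (\<Sum>i. 2 * (a i)^2) + (\<Sum>i. 2 * (b i)^2) - (\<Sum>i. 4 * ((a i + b i) / 2)^2)"
      using suminf_add[OF s1(1,2)] by simp
    finally show ?thesis unfolding qn_def using sa by (simp add: suminf_mult)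
  qed
  finally show ?thesis .
qed

lemma sum_sq_le: fixes a :: "nat \<Rightarrow> real" shows "(\<Sum>j<k. a j)^2 \<le> real k * (\<Sum>j<k. (a j)^2)"
  using wCS[of "\<lambda>_. 1" a "{..<k}"] by simp

lemma sum_split_add: fixes f :: "nat \<Rightarrow> real" shows "(\<Sum>j<n + k. f j) = (\<Sum>j<n. f j) + (\<Sum>j<k. f (n + j))"
  by (induction k) auto

locale birk =
  fixes T :: "seq \<Rightarrow> seq" and x :: seq
  assumes T: "dunford_schwartz T" and x: "x \<in> l1"
begin

definition o' :: "nat \<Rightarrow> seq" where "o' k = (T ^^ k) x"

lemma o_l1: "o' k \<in> l1" unfolding o'_def using DS_l1[OF DS_pow[OF T] x] by auto
lemma o_l2: "o' k \<in> l2s" using l1_imp_l2[OF o_l1] .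
lemma o_qn: "qn (o' k) \<le> qn x" unfolding o'_def using schur[OF DS_pow[OF T] x] by auto
lemma o_linf: "o' k \<in> linf" using l1_imp_linf[OF o_l1] .

lemma avg_o: "ergodic_avg T (o' k) n i = (1 / real n) * (\<Sum>j<n. o' (j + k) i)"
  unfolding ergodic_avg_def o'_def by (simp add: funpow_add)

lemma avg_x: "ergodic_avg T x n i = (1 / real n) * (\<Sum>j<n. o' j i)"
  unfolding ergodic_avg_def o'_def by simp

lemma D_eq: "ergodic_avg T x n i - ergodic_avg T (o' k) n i = (1 / real n) * ((\<Sum>j<k. o' j i) - (\<Sum>j<k. o' (n + j) i))"
proof -
  have "(\<Sum>j<n. o' j i) + (\<Sum>j<k. o' (n + j) i) = (\<Sum>j<k. o' j i) + (\<Sum>j<n. o' (k + j) i)"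
    using sum_split_add[of "\<lambda>j. o' j i" n k] sum_split_add[of "\<lambda>j. o' j i" k n] by (simp add: add.commute)
  then have "(\<Sum>j<n. o' j i) = (\<Sum>j<n. o' (j + k) i) + ((\<Sum>j<k. o' j i) - (\<Sum>j<k. o' (n + j) i))"
    by (simp add: add.commute)
  then show ?thesis unfolding avg_o avg_x by (simp add: add_divide_distrib)
qed

lemma D_qn: assumes n: "n > 0"
  shows "(\<lambda>i. ergodic_avg T x n i - ergodic_avg T (o' k) n i) \<in> l2s \<and>
     qn (\<lambda>i. ergodic_avg T x n i - ergodic_avg T (o' k) n i) \<le> 4 * real k ^ 2 * qn x / real n ^ 2"
proof -
  define f where "f = (\<lambda>j i. (2 * real k / real n ^ 2) * ((o' j i)^2 + (o' (n + j) i)^2))"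
  have fs: "summable (f j)" for j unfolding f_def using o_l2 unfolding l2s_def
    by (intro summable_mult summable_add) auto
  have h: "(ergodic_avg T x n i - ergodic_avg T (o' k) n i)^2 \<le> (\<Sum>j\<in>{..<k}. f j i)" for i
  proof -
    define P where "P = (\<Sum>j<k. o' j i)"
    define R where "R = (\<Sum>j<k. o' (n + j) i)"
    have "(ergodic_avg T x n i - ergodic_avg T (o' k) n i)^2 = (P - R)^2 / real n ^ 2"
      unfolding D_eq P_def R_def by (simp add: power2_eq_square)
    also have "\<dots> \<le> (2 * P^2 + 2 * R^2) / real n ^ 2"
    proof -
      have "(P - R)^2 \<le> 2 * P^2 + 2 * R^2" using zero_le_square[of "P + R"] by (simp add: power2_eq_square algebra_simps)
      then show ?thesis by (intro divide_right_mono) auto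
    qed
    also have "\<dots> \<le> (2 * (real k * (\<Sum>j<k. (o' j i)^2)) + 2 * (real k * (\<Sum>j<k. (o' (n + j) i)^2))) / real n ^ 2"
      unfolding P_def R_def by (intro divide_right_mono add_mono mult_left_mono sum_sq_le) auto
    also have "\<dots> = (\<Sum>j\<in>{..<k}. f j i)"
      unfolding f_def by (simp add: sum_distrib_left sum.distrib algebra_simps add_divide_distrib sum_divide_distrib)
    finally show ?thesis .
  qed
  have "(\<lambda>i. ergodic_avg T x n i - ergodic_avg T (o' k) n i) \<in> l2s \<and>
     qn (\<lambda>i. ergodic_avg T x n i - ergodic_avg T (o' k) n i) \<le> (\<Sum>j\<in>{..<k}. suminf (f j))"
    by (rule qn_dom_sum[OF _ fs h]) auto
  moreover have "(\<Sum>j\<in>{..<k}. suminf (f j)) \<le> (\<Sum>j\<in>{..<k}. 4 * real k * qn x / real n ^ 2)"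
  proof (intro sum_mono)
    fix j
    have "suminf (f j) = (2 * real k / real n ^ 2) * (qn (o' j) + qn (o' (n + j)))"
      unfolding f_def qn_def using o_l2 unfolding l2s_def
      by (subst suminf_mult) (auto intro: summable_add simp: suminf_add)
    also have "\<dots> \<le> (2 * real k / real n ^ 2) * (qn x + qn x)"
      using o_qn by (intro mult_left_mono add_mono) auto
    finally show "suminf (f j) \<le> 4 * real k * qn x / real n ^ 2" by simp
  qed
  moreover have "(\<Sum>j\<in>{..<k}. 4 * real k * qn x / real n ^ 2) = 4 * real k ^ 2 * qn x / real n ^ 2"
    by (simp add: power2_eq_square)
  ultimately show ?thesis by linarith
qed

definition C :: "seq set" where
  "C = {z. \<exists>K c. (\<forall>k. 0 \<le> c k) \<and> (\<Sum>k<K. c k) = 1 \<and> z = (\<lambda>i. \<Sum>k<K. c k * o' k i)}"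

lemma C_l1: "z \<in> C \<Longrightarrow> z \<in> l1"
  unfolding C_def using l1_sum[of _ "\<lambda>k i. _ k * o' k i"] l1_scale[OF o_l1] by auto

lemma x_C: "x \<in> C"
  unfolding C_def by (rule CollectI, rule exI[of _ 1], rule exI[of _ "\<lambda>_. 1"]) (simp add: o'_def)

lemma mid_C: assumes "n > 0" "m > 0"
  shows "(\<lambda>i. (ergodic_avg T x n i + ergodic_avg T x m i) / 2) \<in> C"
proof -
  define K where "K = max n m"
  define c where "c = (\<lambda>k. ((if k < n then 1 / real n else 0) + (if k < m then 1 / real m else 0)) / 2)"
  have r: "(\<Sum>k<K. (if k < p then f k else 0)) = (\<Sum>k<p. f k)" if "p \<le> K" for p and f :: "nat \<Rightarrow> real"
  proof -
    have u: "{..<K} = {..<p} \<union> {p..<K}" using that by auto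
    have "(\<Sum>k<K. (if k < p then f k else 0)) = (\<Sum>k<p. (if k < p then f k else 0)) + (\<Sum>k\<in>{p..<K}. (if k < p then f k else 0))"
      unfolding u by (rule sum.union_disjoint) auto
    then show ?thesis by simp
  qed
  have K: "n \<le> K" "m \<le> K" unfolding K_def by auto
  have "(\<Sum>k<K. c k) = 1"
    unfolding c_def using r[OF K(1), of "\<lambda>_. 1 / real n"] r[OF K(2), of "\<lambda>_. 1 / real m"] assms
    by (simp add: sum.distrib sum_divide_distrib[symmetric])
  moreover have "(\<lambda>i. (ergodic_avg T x n i + ergodic_avg T x m i) / 2) = (\<lambda>i. \<Sum>k<K. c k * o' k i)"
  proof
    fix i
    have t: "c k * o' k i = ((if k < n then o' k i / real n else 0) + (if k < m then o' k i / real m else 0)) / 2" for k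
      unfolding c_def by (auto simp: field_simps)
    have "(\<Sum>k<K. c k * o' k i) = ((\<Sum>k<K. (if k < n then o' k i / real n else 0)) + (\<Sum>k<K. (if k < m then o' k i / real m else 0))) / 2"
      unfolding t by (simp add: sum.distrib[symmetric] sum_divide_distrib[symmetric])
    also have "\<dots> = ((\<Sum>k<n. o' k i / real n) + (\<Sum>k<m. o' k i / real m)) / 2"
      using r[OF K(1)] r[OF K(2)] by simp
    finally show "(ergodic_avg T x n i + ergodic_avg T x m i) / 2 = (\<Sum>k<K. c k * o' k i)"
      unfolding avg_x by (simp add: sum_divide_distrib[symmetric])
  qed
  moreover have "\<forall>k. 0 \<le> c k" unfolding c_def by auto
  ultimately show ?thesis unfolding C_def by blast
qed

end

context birk begin

abbreviation D where "D n k \<equiv> (\<lambda>i. ergodic_avg T x n i - ergodic_avg T (o' k) n i)"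

lemma comb_qn: assumes n: "n > 0" and c: "\<forall>k. 0 \<le> c k" "(\<Sum>k<K. c k) = 1"
  shows "qn (\<lambda>i. ergodic_avg T x n i - ergodic_avg T (\<lambda>i. \<Sum>k<K. c k * o' k i) n i) \<le> 4 * real K ^ 2 * qn x / real n ^ 2"
proof -
  have A: "dunford_schwartz (\<lambda>y. ergodic_avg T y n)" by (rule DS_avg[OF T])
  have "ergodic_avg T (\<lambda>i. \<Sum>k\<in>{..<K}. (\<lambda>i. c k * o' k i) i) n = (\<lambda>i. \<Sum>k\<in>{..<K}. ergodic_avg T (\<lambda>i. c k * o' k i) n i)"
    using DS_sum[OF A, of "{..<K}" "\<lambda>k i. c k * o' k i"] o_linf linf_scale by auto
  also have "\<dots> = (\<lambda>i. \<Sum>k\<in>{..<K}. c k * ergodic_avg T (o' k) n i)"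
    using DS_scale[OF A o_linf] by simp
  finally have e1: "ergodic_avg T (\<lambda>i. \<Sum>k<K. c k * o' k i) n = (\<lambda>i. \<Sum>k<K. c k * ergodic_avg T (o' k) n i)" by simp
  have e2: "ergodic_avg T x n i - ergodic_avg T (\<lambda>i. \<Sum>k<K. c k * o' k i) n i = (\<Sum>k<K. c k * D n k i)" for i
  proof -
    have "ergodic_avg T x n i = (\<Sum>k<K. c k * ergodic_avg T x n i)" using c(2) by (simp add: sum_distrib_right[symmetric])
    then have "ergodic_avg T x n i - (\<Sum>k<K. c k * ergodic_avg T (o' k) n i) = (\<Sum>k<K. c k * ergodic_avg T x n i) - (\<Sum>k<K. c k * ergodic_avg T (o' k) n i)"
      by (rule arg_cong[where f="\<lambda>t. t - (\<Sum>k<K. c k * ergodic_avg T (o' k) n i)"])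
    also have "\<dots> = (\<Sum>k<K. c k * D n k i)" by (simp add: sum_subtractf[symmetric] right_diff_distrib)
    finally show ?thesis unfolding e1 .
  qed
  define f where "f = (\<lambda>k i. c k * (D n k i)^2)"
  have fs: "summable (f k)" for k unfolding f_def using D_qn[OF n, of k] unfolding l2s_def by (auto intro: summable_mult)
  have h: "(ergodic_avg T x n i - ergodic_avg T (\<lambda>i. \<Sum>k<K. c k * o' k i) n i)^2 \<le> (\<Sum>k\<in>{..<K}. f k i)" for i
    unfolding e2 f_def using wCS[of c "\<lambda>k. D n k i" "{..<K}"] c by simp
  have "qn (\<lambda>i. ergodic_avg T x n i - ergodic_avg T (\<lambda>i. \<Sum>k<K. c k * o' k i) n i) \<le> (\<Sum>k\<in>{..<K}. suminf (f k))"
    using qn_dom_sum[OF _ fs h] by auto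
  also have "\<dots> \<le> (\<Sum>k\<in>{..<K}. c k * (4 * real K ^ 2 * qn x / real n ^ 2))"
  proof (intro sum_mono)
    fix k assume k: "k \<in> {..<K}"
    have "suminf (f k) = c k * qn (D n k)" unfolding f_def qn_def using D_qn[OF n, of k] unfolding l2s_def
      by (auto intro: suminf_mult)
    also have "\<dots> \<le> c k * (4 * real k ^ 2 * qn x / real n ^ 2)" using D_qn[OF n, of k] c by (intro mult_left_mono) auto
    also have "\<dots> \<le> c k * (4 * real K ^ 2 * qn x / real n ^ 2)"
      using k c qn_nonneg[OF l1_imp_l2[OF x]]
      by (intro mult_left_mono divide_right_mono mult_right_mono) auto
    finally show "suminf (f k) \<le> c k * (4 * real K ^ 2 * qn x / real n ^ 2)" .
  qed
  also have "\<dots> = (\<Sum>k<K. c k) * (4 * real K ^ 2 * qn x / real n ^ 2)" by (rule sum_distrib_right[symmetric])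
  also have "\<dots> = 4 * real K ^ 2 * qn x / real n ^ 2" using c(2) by simp
  finally show ?thesis .
qed

lemma C_bdd: "bdd_below (qn ` C)"
  using qn_nonneg[OF l1_imp_l2[OF C_l1]] by (auto intro!: bdd_belowI[of _ 0])

lemma cauchy_qn: assumes e: "e > 0"
  shows "\<exists>N. \<forall>n\<ge>N. \<forall>m\<ge>N. qn (\<lambda>i. ergodic_avg T x n i - ergodic_avg T x m i) < e"
proof -
  define d where "d = Inf (qn ` C)"
  have d0: "0 \<le> d" unfolding d_def using x_C qn_nonneg[OF l1_imp_l2[OF C_l1]] by (intro cInf_greatest) auto
  define s where "s = min 1 (e / (8 * (d + 4)))"
  have s0: "0 < s" "s \<le> 1" "s \<le> e / (8 * (d + 4))" unfolding s_def using e d0 by auto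
  obtain z where zC: "z \<in> C" and zd: "qn z < d + s"
    using cInf_lessD[of "qn ` C" "d + s"] x_C s0 unfolding d_def by auto
  then obtain K c where c: "\<forall>k. 0 \<le> c k" "(\<Sum>k<K. c k) = 1" and zeq: "z = (\<lambda>i. \<Sum>k<K. c k * o' k i)"
    unfolding C_def by auto
  define Q where "Q = qn x"
  have Q0: "0 \<le> Q" unfolding Q_def using qn_nonneg[OF l1_imp_l2[OF x]] .
  obtain N0 where N0: "4 * real K ^ 2 * Q / s^2 < real N0" using reals_Archimedean2 by blast
  define N where "N = max N0 1"
  have bnd: "qn (\<lambda>i. ergodic_avg T x n i) \<le> (1 + s) * (d + s) + (1 + 1/s) * s^2" if n: "n \<ge> N" for n
  proof -
    have n0: "n > 0" using n unfolding N_def by auto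
    have "4 * real K ^ 2 * Q < s^2 * real N0" using N0 s0 by (simp add: field_simps)
    also have "\<dots> \<le> s^2 * (real n)^2"
    proof -
      have "real N0 \<le> real n" using n unfolding N_def by auto
      also have "\<dots> \<le> real n ^ 2" using n0 by (simp add: power2_eq_square)
      finally show ?thesis by (intro mult_left_mono) auto
    qed
    finally have b1: "4 * real K ^ 2 * Q / real n ^ 2 \<le> s^2" using n0 by (simp add: field_simps)
    define a where "a = ergodic_avg T z n"
    define b where "b = (\<lambda>i. ergodic_avg T x n i - ergodic_avg T z n i)"
    have zl1: "z \<in> l1" using C_l1[OF zC] .
    have al: "a \<in> l2s" "qn a \<le> qn z" unfolding a_def using schur[OF DS_avg[OF T] zl1] by auto
    have bl: "b \<in> l2s" unfolding b_def zeq
      using l1_imp_l2[OF l1_diff[OF conjunct1[OF DS_l1[OF DS_avg[OF T] x]] conjunct1[OF DS_l1[OF DS_avg[OF T] C_l1[OF zC[unfolded zeq]]]]]] .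
    have bq: "qn b \<le> s^2" unfolding b_def zeq using comb_qn[OF n0 c] b1 unfolding Q_def by linarith
    have "qn (\<lambda>i. ergodic_avg T x n i) = qn (\<lambda>i. a i + b i)" unfolding a_def b_def by simp
    also have "\<dots> \<le> (1 + s) * qn a + (1 + 1/s) * qn b" by (rule qn_split[OF al(1) bl s0(1)])
    also have "\<dots> \<le> (1 + s) * (d + s) + (1 + 1/s) * s^2"
      using al zd bq s0 by (intro add_mono mult_left_mono) auto
    finally show ?thesis .
  qed
  have "qn (\<lambda>i. ergodic_avg T x n i - ergodic_avg T x m i) < e" if n: "n \<ge> N" and m: "m \<ge> N" for n m
  proof -
    have n0: "n > 0" "m > 0" using n m unfolding N_def by auto
    have l: "ergodic_avg T x n \<in> l2s" "ergodic_avg T x m \<in> l2s"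
      using l1_imp_l2 DS_l1[OF DS_avg[OF T] x] by auto
    have md: "d \<le> qn (\<lambda>i. (ergodic_avg T x n i + ergodic_avg T x m i) / 2)"
      unfolding d_def using mid_C[OF n0] C_bdd by (intro cInf_lower) auto
    have "qn (\<lambda>i. ergodic_avg T x n i - ergodic_avg T x m i) =
      2 * qn (ergodic_avg T x n) + 2 * qn (ergodic_avg T x m) - 4 * qn (\<lambda>i. (ergodic_avg T x n i + ergodic_avg T x m i) / 2)"
      by (rule qn_paral[OF l])
    also have "\<dots> \<le> 4 * ((1 + s) * (d + s) + (1 + 1/s) * s^2) - 4 * d"
      using bnd[OF n] bnd[OF m] md by simp
    also have "\<dots> = 4 * s * (d + 2 + 2 * s)" using s0 by (simp add: field_simps power2_eq_square)
    also have "\<dots> \<le> 4 * s * (d + 4)" using s0 d0 by (intro mult_left_mono) auto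
    also have "\<dots> \<le> 4 * (e / (8 * (d + 4))) * (d + 4)" using s0 d0 by (intro mult_right_mono) auto
    also have "\<dots> = e / 2" using d0 by (simp add: field_simps)
    finally show ?thesis using e by linarith
  qed
  then show ?thesis by blast
qed

end

lemma sup_cauchy_l1: assumes T: "dunford_schwartz T" and x: "x \<in> l1" and e: "e > 0"
  shows "\<exists>N. \<forall>n\<ge>N. \<forall>m\<ge>N. \<forall>i. \<bar>ergodic_avg T x n i - ergodic_avg T x m i\<bar> < e"
proof -
  interpret birk T x using T x by unfold_locales
  have e2: "e^2 > 0" using e by simp
  obtain N where N: "\<forall>n\<ge>N. \<forall>m\<ge>N. qn (\<lambda>i. ergodic_avg T x n i - ergodic_avg T x m i) < e^2"
    using cauchy_qn[OF e2] by blast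
  have "\<bar>ergodic_avg T x n i - ergodic_avg T x m i\<bar> < e" if "n \<ge> N" "m \<ge> N" for n m i
  proof -
    have a: "ergodic_avg T x n \<in> l1" "ergodic_avg T x m \<in> l1" using DS_l1[OF DS_avg[OF T] x] by blast+
    have l: "(\<lambda>i. ergodic_avg T x n i - ergodic_avg T x m i) \<in> l2s"
      by (rule l1_imp_l2[OF l1_diff[OF a]])
    have "(ergodic_avg T x n i - ergodic_avg T x m i)^2 < e^2" using qn_ge[OF l, of i] N that by (meson order_le_less_trans)
    then have "\<bar>ergodic_avg T x n i - ergodic_avg T x m i\<bar>^2 < e^2" by simp
    then show ?thesis using e power_less_imp_less_base[of "\<bar>ergodic_avg T x n i - ergodic_avg T x m i\<bar>" 2 e] by simp
  qed
  then show ?thesis by blast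
qed

lemma sup_cauchy_c0: assumes T: "dunford_schwartz T" and x: "x \<in> c0" and e: "e > 0"
  shows "\<exists>N. \<forall>n\<ge>N. \<forall>m\<ge>N. \<forall>i. \<bar>ergodic_avg T x n i - ergodic_avg T x m i\<bar> < e"
proof -
  have e3: "e / 3 > 0" using e by simp
  have "\<exists>N0. \<forall>i\<ge>N0. norm (x i - 0) < e / 3" using x e3 unfolding c0_def LIMSEQ_iff by blast
  then obtain N0 where N0: "\<forall>i\<ge>N0. \<bar>x i\<bar> < e / 3" by auto
  define x' where "x' = trunc N0 x"
  have x'l: "x' \<in> l1" unfolding x'_def by (rule trunc_l1)
  have dx: "\<bar>x i - x' i\<bar> \<le> e / 3" for i
  proof (cases "i < N0")
    case False then have "\<bar>x i\<bar> < e / 3" using N0 by auto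
    then show ?thesis using False unfolding x'_def trunc_def by simp
  qed (use e in \<open>auto simp: x'_def trunc_def\<close>)
  have xl: "x \<in> linf"
  proof -
    have "\<bar>x i\<bar> \<le> e / 3 + (\<Sum>j<N0. \<bar>x j\<bar>)" for i
    proof (cases "i < N0")
      case True
      then have "\<bar>x i\<bar> \<le> (\<Sum>j<N0. \<bar>x j\<bar>)" using member_le_sum[of i "{..<N0}" "\<lambda>j. \<bar>x j\<bar>"] by auto
      then show ?thesis using e by linarith
    next
      case False then have "\<bar>x i\<bar> < e / 3" using N0 by auto
      moreover have "0 \<le> (\<Sum>j<N0. \<bar>x j\<bar>)" by (rule sum_nonneg) simp
      ultimately show ?thesis by linarith
    qed
    then show ?thesis by (rule linfI)
  qed
  have dl: "(\<lambda>i. x i - x' i) \<in> linf" using linf_diff[OF xl l1_imp_linf[OF x'l]] .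
  have A: "\<And>n. dunford_schwartz (\<lambda>y. ergodic_avg T y n)" using DS_avg[OF T] .
  have close: "\<bar>ergodic_avg T x n i - ergodic_avg T x' n i\<bar> \<le> e / 3" for n i
  proof -
    have "ergodic_avg T x n i - ergodic_avg T x' n i = ergodic_avg T (\<lambda>i. x i - x' i) n i"
      using DS_diff[OF A xl l1_imp_linf[OF x'l]] by metis
    also have "\<bar>\<dots>\<bar> \<le> sup_norm (\<lambda>i. x i - x' i)" by (rule DS_supabs[OF A dl])
    also have "\<dots> \<le> e / 3" by (rule sup_norm_le[OF dx])
    finally show ?thesis .
  qed
  obtain N where N: "\<forall>n\<ge>N. \<forall>m\<ge>N. \<forall>i. \<bar>ergodic_avg T x' n i - ergodic_avg T x' m i\<bar> < e / 3"
    using sup_cauchy_l1[OF T x'l, of "e/3"] e by auto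
  have "\<bar>ergodic_avg T x n i - ergodic_avg T x m i\<bar> < e" if "n \<ge> N" "m \<ge> N" for n m i
  proof -
    have "\<bar>ergodic_avg T x' n i - ergodic_avg T x' m i\<bar> < e / 3" using N that by blast
    then show ?thesis using close[of n i] close[of m i] by arith
  qed
  then show ?thesis by blast
qed

lemma unif_limit: fixes f :: "nat \<Rightarrow> seq"
  assumes C: "\<And>e. e > 0 \<Longrightarrow> \<exists>N. \<forall>n\<ge>N. \<forall>m\<ge>N. \<forall>i. \<bar>f n i - f m i\<bar> < e"
  shows "\<exists>g. (\<forall>i. (\<lambda>n. f n i) \<longlonglongrightarrow> g i) \<and> (\<forall>e>0. \<exists>N. \<forall>n\<ge>N. \<forall>i. \<bar>f n i - g i\<bar> \<le> e)"
proof -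
  have "Cauchy (\<lambda>n. f n i)" for i
  proof (rule CauchyI)
    fix e :: real assume "e > 0"
    then obtain N where "\<forall>n\<ge>N. \<forall>m\<ge>N. \<forall>i. \<bar>f n i - f m i\<bar> < e" using C by blast
    then show "\<exists>M. \<forall>m\<ge>M. \<forall>n\<ge>M. norm (f m i - f n i) < e" by auto
  qed
  then have "convergent (\<lambda>n. f n i)" for i using Cauchy_convergent_iff by blast
  then obtain g where g: "\<And>i. (\<lambda>n. f n i) \<longlonglongrightarrow> g i" unfolding convergent_def by metis
  have "\<exists>N. \<forall>n\<ge>N. \<forall>i. \<bar>f n i - g i\<bar> \<le> e" if e: "e > 0" for e
  proof -
    obtain N where N: "\<forall>n\<ge>N. \<forall>m\<ge>N. \<forall>i. \<bar>f n i - f m i\<bar> < e" using C e by blast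
    have "\<bar>f n i - g i\<bar> \<le> e" if "n \<ge> N" for n i
    proof (rule LIMSEQ_le_const2)
      show "(\<lambda>m. \<bar>f n i - f m i\<bar>) \<longlonglongrightarrow> \<bar>f n i - g i\<bar>" using g by (intro tendsto_intros)
      show "\<exists>M. \<forall>m\<ge>M. \<bar>f n i - f m i\<bar> \<le> e" using N that by (intro exI[of _ N]) (auto intro: less_imp_le)
    qed
    then show ?thesis by blast
  qed
  then show ?thesis using g by blast
qed

lemma avg_limit: assumes T: "dunford_schwartz T" and x: "x \<in> c0" "x \<in> linf"
  shows "\<exists>xh. xh \<in> linf \<and> (\<lambda>n. sup_norm (\<lambda>m. ergodic_avg T x n m - xh m)) \<longlonglongrightarrow> 0 \<and>
     (\<forall>e>0. \<exists>N. \<forall>n\<ge>N. \<forall>i. \<bar>ergodic_avg T x n i - xh i\<bar> \<le> e)"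
proof -
  obtain g where g: "\<forall>e>0. \<exists>N. \<forall>n\<ge>N. \<forall>i. \<bar>ergodic_avg T x n i - g i\<bar> \<le> e"
    using unif_limit[of "\<lambda>n. ergodic_avg T x n"] sup_cauchy_c0[OF T x(1)] by blast
  obtain N1 where N1: "\<forall>n\<ge>N1. \<forall>i. \<bar>ergodic_avg T x n i - g i\<bar> \<le> 1" using g by fastforce
  have gl: "g \<in> linf"
  proof (rule linfI)
    fix i
    have "\<bar>ergodic_avg T x N1 i\<bar> \<le> sup_norm x" by (rule DS_supabs[OF DS_avg[OF T] x(2)])
    moreover have "\<bar>ergodic_avg T x N1 i - g i\<bar> \<le> 1" using N1 by auto
    ultimately show "\<bar>g i\<bar> \<le> sup_norm x + 1" by arith
  qed
  have "(\<lambda>n. sup_norm (\<lambda>m. ergodic_avg T x n m - g m)) \<longlonglongrightarrow> 0"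
    unfolding LIMSEQ_iff
  proof (intro allI impI)
    fix r :: real assume r: "r > 0"
    obtain N where N: "\<forall>n\<ge>N. \<forall>i. \<bar>ergodic_avg T x n i - g i\<bar> \<le> r / 2" using g r by (meson half_gt_zero)
    have "norm (sup_norm (\<lambda>m. ergodic_avg T x n m - g m) - 0) < r" if "n \<ge> N" for n
    proof -
      have l: "(\<lambda>m. ergodic_avg T x n m - g m) \<in> linf"
        using linf_diff[OF DS_linf[OF DS_avg[OF T] x(2)] gl] .
      have "sup_norm (\<lambda>m. ergodic_avg T x n m - g m) \<le> r / 2" using N that by (intro sup_norm_le) auto
      then show ?thesis using sup_norm_nonneg[OF l] r by auto
    qed
    then show "\<exists>no. \<forall>n\<ge>no. norm (sup_norm (\<lambda>m. ergodic_avg T x n m - g m) - 0) < r" by blast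
  qed
  then show ?thesis using gl g by blast
qed

lemma ex_notin: "finite (F::nat set) \<Longrightarrow> \<exists>m. m \<notin> F"
  using ex_new_if_finite[OF infinite_UNIV_nat] by auto

lemma compl_ne: "finite (F::nat set) \<Longrightarrow> - F \<noteq> {}"
  using ex_notin by auto

lemma sup_compl_bdd: "y \<in> linf \<Longrightarrow> bdd_above ((\<lambda>m. \<bar>y m\<bar>) ` A)"
proof -
  assume "y \<in> linf"
  then obtain B where "\<forall>i. \<bar>y i\<bar> \<le> B" unfolding linf_iff by auto
  then show ?thesis by (intro bdd_aboveI[of _ B]) auto
qed

lemma sup_compl_ge: "y \<in> linf \<Longrightarrow> m \<in> A \<Longrightarrow> \<bar>y m\<bar> \<le> (SUP m\<in>A. \<bar>y m\<bar>)"
  using sup_compl_bdd by (intro cSUP_upper) auto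

lemma rearr_le: assumes y: "y \<in> linf" and F: "finite F" "card F < n"
  shows "rearr y n \<le> (SUP m\<in>(- F). \<bar>y m\<bar>)"
  unfolding rearr_def
proof (rule cInf_lower)
  show "(SUP m\<in>(- F). \<bar>y m\<bar>) \<in> {(SUP m\<in>(- F). \<bar>y m\<bar>) | F. finite F \<and> card F < n}" using F by blast
  show "bdd_below {(SUP m\<in>(- F). \<bar>y m\<bar>) | F. finite F \<and> card F < n}"
  proof (rule bdd_belowI[of _ 0], clarify)
    fix G :: "nat set" assume G: "finite G"
    obtain m where "m \<notin> G" using ex_notin[OF G] by auto
    then show "0 \<le> (SUP m\<in>(- G). \<bar>y m\<bar>)" using sup_compl_ge[OF y, of m "-G"] by auto
  qed
qed

lemma rearr_ge: assumes y: "y \<in> linf" and n: "n \<ge> 1" and H: "finite H" "card H \<ge> n" and c: "\<forall>h\<in>H. c \<le> \<bar>y h\<bar>"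
  shows "c \<le> rearr y n"
  unfolding rearr_def
proof (rule cInf_greatest)
  show "{(SUP m\<in>(- F). \<bar>y m\<bar>) | F. finite F \<and> card F < n} \<noteq> {}" using n by (auto intro!: exI[of _ "{}"])
  fix s assume "s \<in> {(SUP m\<in>(- F). \<bar>y m\<bar>) | F. finite F \<and> card F < n}"
  then obtain F where F: "finite F" "card F < n" and s: "s = (SUP m\<in>(- F). \<bar>y m\<bar>)" by auto
  have "\<not> H \<subseteq> F"
  proof
    assume "H \<subseteq> F"
    then have "card H \<le> card F" by (rule card_mono[OF F(1)])
    then show False using F(2) H(2) by linarith
  qed
  then obtain h where h: "h \<in> H" "h \<notin> F" by auto
  have "c \<le> \<bar>y h\<bar>" using c h by blast
  also have "\<dots> \<le> (SUP m\<in>(- F). \<bar>y m\<bar>)" using sup_compl_ge[OF y, of h "-F"] h by blast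
  finally show "c \<le> s" unfolding s .
qed

lemma L1: assumes y: "y \<in> linf"
  shows "e > 0 \<Longrightarrow> \<exists>F. finite F \<and> card F = k \<and> (\<Sum>n=1..k. rearr y n) \<le> (\<Sum>i\<in>F. \<bar>y i\<bar>) + e"
proof (induction k arbitrary: e)
  case 0 then show ?case by (intro exI[of _ "{}"]) auto
next
  case (Suc k)
  obtain F where F: "finite F" "card F = k" "(\<Sum>n=1..k. rearr y n) \<le> (\<Sum>i\<in>F. \<bar>y i\<bar>) + e / 2"
    using Suc.IH[of "e/2"] Suc.prems by auto
  define S where "S = (SUP m\<in>(- F). \<bar>y m\<bar>)"
  have r: "rearr y (Suc k) \<le> S" unfolding S_def using rearr_le[OF y F(1)] F(2) by auto
  have "S - e / 2 < S" using Suc.prems by auto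
  then obtain m where m: "m \<in> - F" "S - e / 2 < \<bar>y m\<bar>"
    unfolding S_def using less_cSUP_iff[OF compl_ne[OF F(1)] sup_compl_bdd[OF y]] by auto
  have "card (insert m F) = Suc k" using m F by auto
  moreover have "(\<Sum>n=1..Suc k. rearr y n) \<le> (\<Sum>i\<in>insert m F. \<bar>y i\<bar>) + e"
    using F m r by simp
  ultimately show ?case using F(1) by (intro exI[of _ "insert m F"]) auto
qed

lemma c0_max: assumes x: "x \<in> c0" and J: "finite J"
  shows "\<exists>m. m \<notin> J \<and> (\<forall>m'. m' \<notin> J \<longrightarrow> \<bar>x m'\<bar> \<le> \<bar>x m\<bar>)"
proof -
  obtain m0 where m0: "m0 \<notin> J" using ex_notin[OF J] by auto
  show ?thesis
  proof (cases "\<forall>m'. m' \<notin> J \<longrightarrow> \<bar>x m'\<bar> \<le> \<bar>x m0\<bar>")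
    case True then show ?thesis using m0 by blast
  next
    case False
    then obtain m1 where m1: "m1 \<notin> J" "\<bar>x m1\<bar> > \<bar>x m0\<bar>" by auto
    have p: "\<bar>x m1\<bar> > 0" using m1 by (meson abs_ge_zero le_less_trans)
    have "\<exists>N. \<forall>i\<ge>N. norm (x i - 0) < \<bar>x m1\<bar>" using x p unfolding c0_def LIMSEQ_iff by blast
    then obtain N where N: "\<forall>i\<ge>N. \<bar>x i\<bar> < \<bar>x m1\<bar>" by auto
    define S where "S = {m. m < N \<and> m \<notin> J}"
    have "m1 < N"
    proof (rule ccontr)
      assume "\<not> m1 < N"
      then have "m1 \<ge> N" by simp
      then have "\<bar>x m1\<bar> < \<bar>x m1\<bar>" using N by blast
      then show False by simp
    qed
    then have m1S: "m1 \<in> S" unfolding S_def using m1 by blast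
    have fS: "finite S" unfolding S_def by auto
    define M where "M = Max ((\<lambda>m. \<bar>x m\<bar>) ` S)"
    have "M \<in> (\<lambda>m. \<bar>x m\<bar>) ` S" unfolding M_def using fS m1S by (intro Max_in) auto
    then obtain m where mS: "m \<in> S" and mM: "\<bar>x m\<bar> = M" by auto
    have ge: "\<bar>x m'\<bar> \<le> M" if "m' \<in> S" for m' unfolding M_def using fS that by (intro Max_ge) auto
    have "\<bar>x m'\<bar> \<le> \<bar>x m\<bar>" if "m' \<notin> J" for m'
    proof (cases "m' < N")
      case True then have "m' \<in> S" unfolding S_def using that by blast
      then show ?thesis using ge[of m'] mM by simp
    next
      case False then have "m' \<ge> N" by simp
      then have "\<bar>x m'\<bar> < \<bar>x m1\<bar>" using N by blast
      then show ?thesis using ge[OF m1S] mM by simp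
    qed
    moreover have "m \<notin> J" using mS unfolding S_def by blast
    ultimately show ?thesis by blast
  qed
qed

lemma L2: assumes x: "x \<in> c0" "x \<in> linf"
  shows "\<exists>J. finite J \<and> card J = k \<and> (\<forall>i\<in>J. \<forall>m. m \<notin> J \<longrightarrow> \<bar>x m\<bar> \<le> \<bar>x i\<bar>) \<and> (\<Sum>i\<in>J. \<bar>x i\<bar>) \<le> (\<Sum>n=1..k. rearr x n)"
proof (induction k)
  case 0 then show ?case by (intro exI[of _ "{}"]) auto
next
  case (Suc k)
  then obtain J where J: "finite J" "card J = k" "\<forall>i\<in>J. \<forall>m. m \<notin> J \<longrightarrow> \<bar>x m\<bar> \<le> \<bar>x i\<bar>" "(\<Sum>i\<in>J. \<bar>x i\<bar>) \<le> (\<Sum>n=1..k. rearr x n)"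
    by auto
  obtain m where m: "m \<notin> J" "\<forall>m'. m' \<notin> J \<longrightarrow> \<bar>x m'\<bar> \<le> \<bar>x m\<bar>" using c0_max[OF x(1) J(1)] by auto
  have c: "card (insert m J) = Suc k" using J m by auto
  have "\<bar>x m\<bar> \<le> rearr x (Suc k)"
    by (rule rearr_ge[OF x(2), of _ "insert m J"]) (use J m c in auto)
  then have "(\<Sum>i\<in>insert m J. \<bar>x i\<bar>) \<le> (\<Sum>n=1..Suc k. rearr x n)" using J m by simp
  moreover have "\<forall>i\<in>insert m J. \<forall>m'. m' \<notin> insert m J \<longrightarrow> \<bar>x m'\<bar> \<le> \<bar>x i\<bar>" using J m by auto
  ultimately show ?case using J c by (intro exI[of _ "insert m J"]) auto
qed

lemma sgn_abs_diff: assumes "0 \<le> t" "t \<le> \<bar>v\<bar>" shows "\<bar>v - sgn v * t\<bar> = \<bar>v\<bar> - (t::real)"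
  using assms by (cases "v > 0"; cases "v = 0") (auto simp: sgn_if)

lemma majorize: assumes T: "dunford_schwartz T" and x: "x \<in> c0" "x \<in> linf"
  and xh: "xh \<in> linf" and conv: "\<forall>e>0. \<exists>N. \<forall>n\<ge>N. \<forall>i. \<bar>ergodic_avg T x n i - xh i\<bar> \<le> e"
  shows "majorized xh x"
  unfolding majorized_def
proof
  fix k
  show "(\<Sum>n=1..k. rearr xh n) \<le> (\<Sum>n=1..k. rearr x n)"
  proof (cases "k = 0")
    case True then show ?thesis by simp
  next
    case False
    obtain J where J: "finite J" "card J = k" "\<forall>i\<in>J. \<forall>m. m \<notin> J \<longrightarrow> \<bar>x m\<bar> \<le> \<bar>x i\<bar>"
      "(\<Sum>i\<in>J. \<bar>x i\<bar>) \<le> (\<Sum>n=1..k. rearr x n)" using L2[OF x] by blast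
    have Jne: "J \<noteq> {}" using J(2) False by auto
    define t where "t = Min ((\<lambda>i. \<bar>x i\<bar>) ` J)"
    have tle: "t \<le> \<bar>x i\<bar>" if "i \<in> J" for i unfolding t_def using J(1) that by (intro Min_le) auto
    have tge: "\<bar>x m\<bar> \<le> t" if "m \<notin> J" for m unfolding t_def using J(1) Jne J(3) that by (subst Min_ge_iff) auto
    have t0: "0 \<le> t" unfolding t_def using J(1) Jne by (subst Min_ge_iff) auto
    define a where "a = (\<lambda>i. if i \<in> J then x i - sgn (x i) * t else 0)"
    define b where "b = (\<lambda>i. if i \<in> J then sgn (x i) * t else x i)"
    have xab: "x = (\<lambda>i. a i + b i)" unfolding a_def b_def by auto
    have al: "a \<in> l1" and an: "l1_norm a = (\<Sum>i\<in>J. \<bar>x i\<bar> - t)"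
    proof -
      have "a \<in> l1 \<and> l1_norm a = (\<Sum>i\<in>J. \<bar>a i\<bar>)" using finite_supp_l1[of J a] J(1) unfolding a_def by auto
      moreover have "(\<Sum>i\<in>J. \<bar>a i\<bar>) = (\<Sum>i\<in>J. \<bar>x i\<bar> - t)"
        unfolding a_def using sgn_abs_diff[OF t0 tle] by (intro sum.cong) auto
      ultimately show "a \<in> l1" "l1_norm a = (\<Sum>i\<in>J. \<bar>x i\<bar> - t)" by auto
    qed
    have bb: "\<bar>b i\<bar> \<le> t" for i unfolding b_def using tge t0 by (auto simp: sgn_if abs_mult)
    have bl: "b \<in> linf" using bb by (rule linfI)
    have sab: "l1_norm a + real k * t \<le> (\<Sum>n=1..k. rearr x n)"
      using an J(2,4) by (simp add: sum_subtractf)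
    have A: "\<And>n. dunford_schwartz (\<lambda>y. ergodic_avg T y n)" using DS_avg[OF T] .
    show ?thesis
    proof (rule field_le_epsilon)
      fix e :: real assume e: "e > 0"
      obtain F where F: "finite F" "card F = k" "(\<Sum>n=1..k. rearr xh n) \<le> (\<Sum>i\<in>F. \<bar>xh i\<bar>) + e / 2"
        using L1[OF xh, of "e/2" k] e by auto
      define \<delta> where "\<delta> = e / (2 * (real k + 1))"
      have \<delta>0: "\<delta> > 0" unfolding \<delta>_def using e by auto
      obtain N where N: "\<forall>n\<ge>N. \<forall>i. \<bar>ergodic_avg T x N i - xh i\<bar> \<le> \<delta>" using conv \<delta>0 by blast
      have NN: "\<bar>ergodic_avg T x N i - xh i\<bar> \<le> \<delta>" for i using N by blast
      have split: "ergodic_avg T x N i = ergodic_avg T a N i + ergodic_avg T b N i" for i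
      proof -
        have "ergodic_avg T x N = ergodic_avg T (\<lambda>i. a i + b i) N" using xab by simp
        also have "\<dots> = (\<lambda>i. ergodic_avg T a N i + ergodic_avg T b N i)"
          by (rule DS_add[OF A l1_imp_linf[OF al] bl])
        finally show ?thesis by simp
      qed
      have "(\<Sum>i\<in>F. \<bar>xh i\<bar>) \<le> (\<Sum>i\<in>F. \<bar>ergodic_avg T a N i\<bar> + \<bar>ergodic_avg T b N i\<bar> + \<delta>)"
      proof (rule sum_mono)
        fix i
        show "\<bar>xh i\<bar> \<le> \<bar>ergodic_avg T a N i\<bar> + \<bar>ergodic_avg T b N i\<bar> + \<delta>"
          using NN[of i] split[of i] by arith
      qed
      also have "\<dots> = (\<Sum>i\<in>F. \<bar>ergodic_avg T a N i\<bar>) + (\<Sum>i\<in>F. \<bar>ergodic_avg T b N i\<bar>) + real k * \<delta>"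
        using F(2) by (simp add: sum.distrib)
      also have "\<dots> \<le> l1_norm a + real k * t + real k * \<delta>"
      proof -
        have "(\<Sum>i\<in>F. \<bar>ergodic_avg T a N i\<bar>) \<le> l1_norm (ergodic_avg T a N)"
          using l1_norm_ge_sum[OF conjunct1[OF DS_l1[OF A al]] F(1)] .
        also have "\<dots> \<le> l1_norm a" using DS_l1[OF A al] by blast
        finally have 1: "(\<Sum>i\<in>F. \<bar>ergodic_avg T a N i\<bar>) \<le> l1_norm a" .
        have "(\<Sum>i\<in>F. \<bar>ergodic_avg T b N i\<bar>) \<le> (\<Sum>i\<in>F. t)"
        proof (rule sum_mono)
          fix i
          have "\<bar>ergodic_avg T b N i\<bar> \<le> sup_norm b" by (rule DS_supabs[OF A bl])
          also have "\<dots> \<le> t" by (rule sup_norm_le[OF bb])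
          finally show "\<bar>ergodic_avg T b N i\<bar> \<le> t" .
        qed
        then have 2: "(\<Sum>i\<in>F. \<bar>ergodic_avg T b N i\<bar>) \<le> real k * t" using F(2) by simp
        show ?thesis using 1 2 by linarith
      qed
      finally have "(\<Sum>n=1..k. rearr xh n) \<le> (\<Sum>n=1..k. rearr x n) + real k * \<delta> + e / 2"
        using F(3) sab by linarith
      moreover have "real k * \<delta> \<le> e / 2"
        unfolding \<delta>_def using e by (simp add: field_simps)
      ultimately show "(\<Sum>n=1..k. rearr xh n) \<le> (\<Sum>n=1..k. rearr x n) + e" by linarith
    qed
  qed
qed

definition shiftop :: "seq \<Rightarrow> seq" where "shiftop x = (\<lambda>n. if n = 0 then 0 else x (n - 1))"

lemma shift_l1: assumes x: "x \<in> l1" shows "shiftop x \<in> l1 \<and> l1_norm (shiftop x) = l1_norm x"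
proof -
  have e: "(\<lambda>n. \<bar>shiftop x (Suc n)\<bar>) = (\<lambda>n. \<bar>x n\<bar>)" unfolding shiftop_def by auto
  have s: "summable (\<lambda>n. \<bar>shiftop x n\<bar>)" using x summable_Suc_iff[of "\<lambda>n. \<bar>shiftop x n\<bar>"] unfolding e l1_def by auto
  have "(\<Sum>n. \<bar>shiftop x (Suc n)\<bar>) = (\<Sum>n. \<bar>shiftop x n\<bar>) - \<bar>shiftop x 0\<bar>" by (rule suminf_split_head[OF s])
  then have "l1_norm x = l1_norm (shiftop x)" unfolding l1_norm_def e by (simp add: shiftop_def)
  then show ?thesis using s unfolding l1_def by auto
qed

lemma DS_shift: "dunford_schwartz shiftop"
proof -
  have lin: "shiftop x \<in> linf" if xl: "x \<in> linf" for x
  proof -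
    obtain B where B: "\<forall>i. \<bar>x i\<bar> \<le> B" using xl unfolding linf_iff by auto
    then have "0 \<le> B" by (meson abs_ge_zero order_trans)
    then show ?thesis using B by (intro linfI[of _ B]) (auto simp: shiftop_def)
  qed
  have sup: "sup_norm (shiftop x) \<le> sup_norm x" if "x \<in> linf" for x
    using sup_norm_ge[OF that] sup_norm_nonneg[OF that] by (intro sup_norm_le) (auto simp: shiftop_def)
  show ?thesis unfolding dunford_schwartz_def linear_on_linf_def
    using lin sup shift_l1 by (auto simp: shiftop_def)
qed

lemma shift_pow: "(shiftop ^^ k) one_seq n = (if k \<le> n then 1 else 0)"
proof (induction k arbitrary: n)
  case 0 then show ?case by (simp add: one_seq_def)
next
  case (Suc k) then show ?case by (auto simp: shiftop_def)
qed

lemma shift_avg_sum: "(\<Sum>k<n. (shiftop ^^ k) one_seq m) = real (min n (Suc m))"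
proof -
  have "(\<Sum>k<n. (shiftop ^^ k) one_seq m) = (\<Sum>k<n. if k \<le> m then 1 else 0)" by (simp add: shift_pow)
  also have "\<dots> = real (card {k. k < n \<and> k \<le> m})" by (simp add: sum.If_cases Int_def conj_commute)
  also have "{k. k < n \<and> k \<le> m} = {..<min n (Suc m)}" by auto
  finally show ?thesis by simp
qed

lemma one_not_c0: "one_seq \<notin> c0"
  unfolding c0_def one_seq_def using LIMSEQ_const_iff[of "1::real" 0] by auto

lemma one_linf: "one_seq \<in> linf" unfolding one_seq_def by (intro linfI[of _ 1]) auto

lemma rearr_one: "n \<ge> 1 \<Longrightarrow> rearr one_seq n \<le> 1"
  using rearr_le[OF one_linf, of "{}" n] by (simp add: one_seq_def cSUP_const)

lemma not_c0_one: assumes FS: "fully_symmetric E NE" and xE: "x \<in> E" and xc: "x \<notin> c0"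
  shows "one_seq \<in> E"
proof -
  have S: "symmetric_seq_space E NE" using FS unfolding fully_symmetric_def by auto
  have xl: "x \<in> linf" using S xE unfolding symmetric_seq_space_def by auto
  have "\<not> (\<forall>r>0. \<exists>no. \<forall>n\<ge>no. norm (x n - 0) < r)" using xc unfolding c0_def LIMSEQ_iff by auto
  then obtain \<epsilon> where \<epsilon>: "\<epsilon> > 0" "\<forall>no. \<exists>n\<ge>no. \<epsilon> \<le> \<bar>x n\<bar>" by (auto simp: not_less)
  define y where "y = (\<lambda>n. (1 / \<epsilon>) * x n)"
  have "\<forall>x\<in>E. \<forall>c. (\<lambda>n. c * x n) \<in> E" using S unfolding symmetric_seq_space_def by blast
  then have yE: "y \<in> E" unfolding y_def using xE by blast
  have yl: "y \<in> linf" unfolding y_def by (rule linf_scale[OF xl])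
  have "1 \<le> rearr y n" if n: "n \<ge> 1" for n
    unfolding rearr_def
  proof (rule cInf_greatest)
    show "{(SUP m\<in>(- F). \<bar>y m\<bar>) | F. finite F \<and> card F < n} \<noteq> {}" using n by (auto intro!: exI[of _ "{}"])
    fix s assume "s \<in> {(SUP m\<in>(- F). \<bar>y m\<bar>) | F. finite F \<and> card F < n}"
    then obtain F where F: "finite F" and s: "s = (SUP m\<in>(- F). \<bar>y m\<bar>)" by auto
    obtain N where N: "\<forall>m\<in>F. m < N" using finite_nat_bounded[OF F] by auto
    obtain h where h: "h \<ge> N" "\<epsilon> \<le> \<bar>x h\<bar>" using \<epsilon>(2) by blast
    have hF: "h \<notin> F" using N h by auto
    have "1 \<le> \<bar>y h\<bar>" unfolding y_def using h \<epsilon>(1) by (simp add: abs_mult field_simps)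
    also have "\<dots> \<le> s" unfolding s using sup_compl_ge[OF yl, of h "-F"] hF by auto
    finally show "1 \<le> s" .
  qed
  then have "\<forall>n\<ge>1. rearr one_seq n \<le> rearr y n" using rearr_one by (meson order_trans)
  then show ?thesis using S yE one_linf unfolding symmetric_seq_space_def by blast
qed

lemma ii_iii: assumes FS: "fully_symmetric E NE" shows "E \<subseteq> c0 \<longleftrightarrow> one_seq \<notin> E"
  using one_not_c0 not_c0_one[OF FS] by blast

lemma ii_i: assumes FS: "fully_symmetric E NE" and c: "E \<subseteq> c0" shows "uniform_IET_property E"
  unfolding uniform_IET_property_def
proof (intro ballI allI impI)
  fix x T assume xE: "x \<in> E" and T: "dunford_schwartz T"
  have S: "symmetric_seq_space E NE" using FS unfolding fully_symmetric_def by auto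
  have xl: "x \<in> linf" using S xE unfolding symmetric_seq_space_def by auto
  have xc: "x \<in> c0" using c xE by auto
  obtain xh where xh: "xh \<in> linf" "(\<lambda>n. sup_norm (\<lambda>m. ergodic_avg T x n m - xh m)) \<longlonglongrightarrow> 0"
    "\<forall>e>0. \<exists>N. \<forall>n\<ge>N. \<forall>i. \<bar>ergodic_avg T x n i - xh i\<bar> \<le> e" using avg_limit[OF T xc xl] by blast
  have "majorized xh x" by (rule majorize[OF T xc xl xh(1) xh(3)])
  then have "xh \<in> E" using FS xh(1) xE unfolding fully_symmetric_def by blast
  then show "\<exists>xh\<in>E. (\<lambda>n. sup_norm (\<lambda>m. ergodic_avg T x n m - xh m)) \<longlonglongrightarrow> 0" using xh(2) by blast
qed

lemma i_ii: assumes FS: "fully_symmetric E NE" and U: "uniform_IET_property E" shows "E \<subseteq> c0"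
proof (rule ccontr)
  assume "\<not> E \<subseteq> c0"
  then have oE: "one_seq \<in> E" using ii_iii[OF FS] by blast
  have S: "symmetric_seq_space E NE" using FS unfolding fully_symmetric_def by auto
  obtain xh where xhE: "xh \<in> E" and cv: "(\<lambda>n. sup_norm (\<lambda>m. ergodic_avg shiftop one_seq n m - xh m)) \<longlonglongrightarrow> 0"
    using U oE DS_shift unfolding uniform_IET_property_def by blast
  have xhl: "xh \<in> linf" using S xhE unfolding symmetric_seq_space_def by auto
  define A where "A = (\<lambda>n. ergodic_avg shiftop one_seq n)"
  have Al: "A n \<in> linf" for n unfolding A_def by (rule DS_linf[OF DS_avg[OF DS_shift] one_linf])
  have dl: "(\<lambda>m. A n m - xh m) \<in> linf" for n by (rule linf_diff[OF Al xhl])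
  have Aval: "A n m = real (min n (Suc m)) / real n" for n m
    unfolding A_def ergodic_avg_def shift_avg_sum by simp
  have xh0: "xh m = 0" for m
  proof -
    have "(\<lambda>n. A n m) \<longlonglongrightarrow> xh m"
    proof -
      have "(\<lambda>n. A n m - xh m) \<longlonglongrightarrow> 0"
      proof (rule Lim_null_comparison)
        show "\<forall>\<^sub>F n in sequentially. norm (A n m - xh m) \<le> sup_norm (\<lambda>m. A n m - xh m)"
          using sup_norm_ge[OF dl] by auto
        show "(\<lambda>n. sup_norm (\<lambda>m. A n m - xh m)) \<longlonglongrightarrow> 0" using cv unfolding A_def .
      qed
      then show ?thesis using LIM_zero_iff by blast
    qed
    moreover have "(\<lambda>n. A n m) \<longlonglongrightarrow> 0"
    proof -
      have "(\<lambda>n. real (Suc m) / real n) \<longlonglongrightarrow> 0" by (rule lim_const_over_n)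
      moreover have "\<forall>\<^sub>F n in sequentially. real (Suc m) / real n = A n m"
        unfolding Aval eventually_sequentially by (intro exI[of _ "Suc m"]) auto
      ultimately show ?thesis by (rule Lim_transform_eventually)
    qed
    ultimately show ?thesis using LIMSEQ_unique by blast
  qed
  have "1 \<le> sup_norm (\<lambda>m. A n m - xh m)" if n: "n \<ge> 1" for n
  proof -
    have "A n (n - 1) = 1" unfolding Aval using n by auto
    then show ?thesis using sup_norm_ge[OF dl, of n "n - 1"] xh0 by simp
  qed
  moreover obtain N where "\<forall>n\<ge>N. norm (sup_norm (\<lambda>m. A n m - xh m) - 0) < 1"
    using cv unfolding A_def LIMSEQ_iff by (meson zero_less_one)
  ultimately show False using sup_norm_nonneg[OF dl] by (metis le_add2 add.commute not_less real_norm_def diff_zero abs_of_nonneg)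
qed

theorem theorem3p6:
  assumes "fully_symmetric E NE"
  shows "(uniform_IET_property E \<longleftrightarrow> E \<subseteq> c0) \<and> (E \<subseteq> c0 \<longleftrightarrow> one_seq \<notin> E)"
  using i_ii[OF assms] ii_i[OF assms] ii_iii[OF assms] by blast

end
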